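(* For all $p\in[1,\infty)$, $$\sup_{N\in\mathbb{N}}\Big(N^p\cdot\mathbb{P}\big[(\Omega^N_N)^c\big]\Big)<\infty.$$
   Context: Standing setting: $T\in(0,\infty)$; $(\Omega,\mathcal{F},\mathbb{P})$ with normal filtration $(\mathcal{F}_t)_{t\in[0,T]}$; $d,m\in\mathbb{N}$; $W$ an $m$-dimensional standard $(\mathcal{F}_t)$-Brownian motion; $\xi$ $\mathcal{F}_0$-measurable in $\mathbb{R}^d$ with $\mathbb{E}\|\xi\|^p<\infty$ for all $p\ge1$. $\|\cdot\|$ Euclidean/operator norm. $\mu\colon\mathbb{R}^d\to\mathbb{R}^d$ is $C^1$, $\sigma\colon\mathbb{R}^d\to\mathbb{R}^{d\times m}$, and there is $c\in(0,\infty)$ with $\|\mu'(x)\|\le c(1+\|x\|^c)$, $\|\sigma(x)-\sigma(y)\|\le c\|x-y\|$, $\langle x-y,\mu(x)-\mu(y)\rangle\le c\|x-y\|^2$. $\Delta W^N_n:=W_{(n+1)T/N}-W_{nT/N}$; tamed Euler scheme $Y^N_0=\xi$, $Y^N_{n+1}=Y^N_n+\frac{(T/N)\mu(Y^N_n)}{1+(T/N)\|\mu(Y^N_n)\|}+\sigma(Y^N_n)\Delta W^N_n$. $\lambda:=(1+2c+T+\|\mu(0)\|+\|\sigma(0)\|)^4$; $\alpha^N_n:=\mathbf{1}_{\{\|Y^N_n\|\ge1\}}\big\langle\frac{Y^N_n}{\|Y^N_n\|},\frac{\sigma(Y^N_n)}{\|Y^N_n\|}\Delta W^N_n\big\rangle$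 (0 if $\|Y^N_n\|<1$); $D^N_n:=(\lambda+\|\xi\|)\exp\big(\lambda+\sup_{u\in\{0,\dots,n\}}\sum_{k=u}^{n-1}[\lambda\|\Delta W^N_k\|^2+\alpha^N_k]\big)$, empty sums $0$. $\Omega^N_n:=\{\omega:\ \sup_{k\in\{0,\dots,n-1\}}D^N_k(\omega)\le N^{1/(2c)},\ \sup_{k\in\{0,\dots,n-1\}}\|\Delta W^N_k(\omega)\|\le1\}$. *)

theory Defs
  imports "HOL-Probability.Probability"
begin

definition normal_filtration :: "'a measure \<Rightarrow> real \<Rightarrow> (real \<Rightarrow> 'a measure) \<Rightarrow> bool" where
  "normal_filtration M T F \<longleftrightarrow>
     (\<forall>t\<in>{0..T}. space (F t) = space M \<and> sets (F t) \<subseteq> sets M) \<and>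
     (\<forall>s t. 0 \<le> s \<and> s \<le> t \<and> t \<le> T \<longrightarrow> sets (F s) \<subseteq> sets (F t)) \<and>
     (\<forall>t\<in>{0..<T}. sets (F t) = (\<Inter>s\<in>{t<..T}. sets (F s))) \<and>
     (\<forall>A\<in>sets M. emeasure M A = 0 \<longrightarrow> A \<in> sets (F 0))"

definition std_brownian_motion ::
  "'a measure \<Rightarrow> real \<Rightarrow> (real \<Rightarrow> 'a measure) \<Rightarrow> (real \<Rightarrow> 'a \<Rightarrow> real^'m::finite) \<Rightarrow> bool" where
  "std_brownian_motion M T F W \<longleftrightarrow>
     (AE \<omega> in M. W 0 \<omega> = 0) \<and>
     (AE \<omega> in M. continuous_on {0..T} (\<lambda>t. W t \<omega>)) \<and>
     (\<forall>t\<in>{0..T}. W t \<in> borel_measurable (F t)) \<and>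
     (\<forall>s t. 0 \<le> s \<and> s < t \<and> t \<le> T \<longrightarrow>
        distributed M lborel (\<lambda>\<omega>. W t \<omega> - W s \<omega>)
          (\<lambda>x. ennreal (\<Prod>j\<in>UNIV. normal_density 0 (sqrt (t - s)) (x $ j))) \<and>
        (\<forall>A\<in>sets (F s). \<forall>B\<in>sets borel.
           measure M (A \<inter> ((\<lambda>\<omega>. W t \<omega> - W s \<omega>) -` B \<inter> space M)) =
           measure M A * measure M ((\<lambda>\<omega>. W t \<omega> - W s \<omega>) -` B \<inter> space M)))"

definition dW :: "real \<Rightarrow> (real \<Rightarrow> 'a \<Rightarrow> real^'m::finite) \<Rightarrow> nat \<Rightarrow> nat \<Rightarrow> 'a \<Rightarrow> real^'m" where
  "dW T W N n \<omega> = W (real (n + 1) * T / real N) \<omega> - W (real n * T / real N) \<omega>"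

fun tamed_euler :: "real \<Rightarrow> (real^'d::finite \<Rightarrow> real^'d) \<Rightarrow> (real^'d \<Rightarrow> ((real^'m::finite) \<Rightarrow>\<^sub>L (real^'d)))
    \<Rightarrow> (real \<Rightarrow> 'a \<Rightarrow> real^'m) \<Rightarrow> ('a \<Rightarrow> real^'d) \<Rightarrow> nat \<Rightarrow> nat \<Rightarrow> 'a \<Rightarrow> real^'d" where
  "tamed_euler T \<mu> \<sigma> W \<xi> N 0 \<omega> = \<xi> \<omega>"
| "tamed_euler T \<mu> \<sigma> W \<xi> N (Suc n) \<omega> =
     (let y = tamed_euler T \<mu> \<sigma> W \<xi> N n \<omega>; h = T / real N in
        y + (h / (1 + h * norm (\<mu> y))) *\<^sub>R \<mu> y + blinfun_apply (\<sigma> y) (dW T W N n \<omega>))"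

definition lam :: "real \<Rightarrow> real \<Rightarrow> (real^'d::finite \<Rightarrow> real^'d) \<Rightarrow> (real^'d \<Rightarrow> ((real^'m::finite) \<Rightarrow>\<^sub>L (real^'d))) \<Rightarrow> real" where
  "lam c T \<mu> \<sigma> = (1 + 2 * c + T + norm (\<mu> 0) + norm (\<sigma> 0)) ^ 4"

definition alpha :: "real \<Rightarrow> (real^'d::finite \<Rightarrow> real^'d) \<Rightarrow> (real^'d \<Rightarrow> ((real^'m::finite) \<Rightarrow>\<^sub>L (real^'d)))
    \<Rightarrow> (real \<Rightarrow> 'a \<Rightarrow> real^'m) \<Rightarrow> ('a \<Rightarrow> real^'d) \<Rightarrow> nat \<Rightarrow> nat \<Rightarrow> 'a \<Rightarrow> real" where
  "alpha T \<mu> \<sigma> W \<xi> N n \<omega> =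
     (let y = tamed_euler T \<mu> \<sigma> W \<xi> N n \<omega> in
        if norm y \<ge> 1 then inner (y /\<^sub>R norm y) (blinfun_apply (\<sigma> y) (dW T W N n \<omega>) /\<^sub>R norm y) else 0)"

definition Dn :: "real \<Rightarrow> real \<Rightarrow> (real^'d::finite \<Rightarrow> real^'d) \<Rightarrow> (real^'d \<Rightarrow> ((real^'m::finite) \<Rightarrow>\<^sub>L (real^'d)))
    \<Rightarrow> (real \<Rightarrow> 'a \<Rightarrow> real^'m) \<Rightarrow> ('a \<Rightarrow> real^'d) \<Rightarrow> nat \<Rightarrow> nat \<Rightarrow> 'a \<Rightarrow> real" where
  "Dn c T \<mu> \<sigma> W \<xi> N n \<omega> =
     (let l = lam c T \<mu> \<sigma> in
       (l + norm (\<xi> \<omega>)) * exp (l + Max ((\<lambda>u. \<Sum>k\<in>{u..<n}.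
            l * (norm (dW T W N k \<omega>))\<^sup>2 + alpha T \<mu> \<sigma> W \<xi> N k \<omega>) ` {0..n})))"

definition OmegaN :: "'a measure \<Rightarrow> real \<Rightarrow> real \<Rightarrow> (real^'d::finite \<Rightarrow> real^'d) \<Rightarrow> (real^'d \<Rightarrow> ((real^'m::finite) \<Rightarrow>\<^sub>L (real^'d)))
    \<Rightarrow> (real \<Rightarrow> 'a \<Rightarrow> real^'m) \<Rightarrow> ('a \<Rightarrow> real^'d) \<Rightarrow> nat \<Rightarrow> nat \<Rightarrow> 'a set" where
  "OmegaN M c T \<mu> \<sigma> W \<xi> N n =
     {\<omega>\<in>space M. (\<forall>k<n. Dn c T \<mu> \<sigma> W \<xi> N k \<omega> \<le> real N powr (1 / (2 * c))) \<and>
                 (\<forall>k<n. norm (dW T W N k \<omega>) \<le> 1)}"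

end

theory Submission
  imports Defs
begin

lemma nn_integral_normal_density_one:
  assumes "0 < s" shows "(\<integral>\<^sup>+ x. ennreal (normal_density m s x) \<partial>lborel) = 1"
proof -
  have "(\<integral>\<^sup>+ x. ennreal (normal_density m s x) \<partial>lborel) = ennreal (\<integral>x. normal_density m s x \<partial>lborel)"
    by (rule nn_integral_eq_integral) (auto intro: integrable_normal_density assms)
  thus ?thesis using integral_normal_density assms by simp
qed

lemma gauss1:
  fixes s a b :: real
  assumes s: "0 < s" and q: "0 < 1 - 2 * a * s\<^sup>2"
  shows "(\<integral>\<^sup>+ y. ennreal (normal_density 0 s y * exp (a * y\<^sup>2 + b * y)) \<partial>lborel)
         = ennreal (exp (b\<^sup>2 * s\<^sup>2 / (2 * (1 - 2 * a * s\<^sup>2))) / sqrt (1 - 2 * a * s\<^sup>2))"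
proof -
  define q where "q = 1 - 2 * a * s\<^sup>2"
  define s' where "s' = s / sqrt q"
  define m where "m = b * s\<^sup>2 / q"
  have qp: "q > 0" using q q_def by simp
  have s'p: "s' > 0" using qp s by (simp add: s'_def)
  have s'2: "s'\<^sup>2 = s\<^sup>2 / q" using qp by (simp add: s'_def power_divide)
  have pt: "normal_density 0 s y * exp (a * y\<^sup>2 + b * y) =
        exp (b\<^sup>2 * s\<^sup>2 / (2 * q)) / sqrt q * normal_density m s' y" for y
  proof -
    have e: "- (y - 0)\<^sup>2 / (2 * s\<^sup>2) + (a * y\<^sup>2 + b * y) = b\<^sup>2 * s\<^sup>2 / (2 * q) + (-(y - m)\<^sup>2 / (2 * s'\<^sup>2))"
    proof -
      have a_eq: "a = (1 - q) / (2 * s\<^sup>2)" using s by (simp add: q_def field_simps)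
      show ?thesis unfolding s'2 m_def a_eq using qp s by (simp add: field_simps power2_eq_square)
    qed
    have r: "sqrt (2 * pi * s'\<^sup>2) = sqrt (2 * pi * s\<^sup>2) / sqrt q"
      using qp by (simp add: s'2 real_sqrt_divide)
    have "normal_density 0 s y * exp (a * y\<^sup>2 + b * y)
        = 1 / sqrt (2 * pi * s\<^sup>2) * exp (- (y - 0)\<^sup>2 / (2 * s\<^sup>2) + (a * y\<^sup>2 + b * y))"
      unfolding normal_density_def exp_add by simp
    also have "\<dots> = 1 / sqrt (2 * pi * s\<^sup>2) * (exp (b\<^sup>2 * s\<^sup>2 / (2 * q)) * exp (-(y - m)\<^sup>2 / (2 * s'\<^sup>2)))"
      unfolding e exp_add by simp
    also have "\<dots> = exp (b\<^sup>2 * s\<^sup>2 / (2 * q)) / sqrt q * normal_density m s' y"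
      unfolding normal_density_def r using qp by simp
    finally show ?thesis .
  qed
  define K where "K = exp (b\<^sup>2 * s\<^sup>2 / (2 * q)) / sqrt q"
  have K0: "K \<ge> 0" using qp by (simp add: K_def)
  have "(\<integral>\<^sup>+ y. ennreal (K * normal_density m s' y) \<partial>lborel) = (\<integral>\<^sup>+ y. ennreal K * ennreal (normal_density m s' y) \<partial>lborel)"
    using K0 by (simp add: ennreal_mult)
  also have "\<dots> = ennreal K" by (simp add: nn_integral_cmult nn_integral_normal_density_one s'p)
  finally show ?thesis
    unfolding pt q_def[symmetric] K_def[symmetric] .
qed

lemma Basis_vec_real: "(Basis :: (real^'m::finite) set) = range (\<lambda>i. axis i 1)"
  unfolding Basis_vec_def by auto

lemma prod_Basis_vec:
  fixes g :: "real^'m::finite \<Rightarrow> 'b::comm_monoid_mult"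
  shows "(\<Prod>b\<in>Basis. g b) = (\<Prod>i\<in>UNIV. g (axis i 1))"
  unfolding Basis_vec_real
  by (subst prod.reindex) (auto simp: inj_on_def axis_eq_axis)

lemma gaussN:
  fixes h a :: real and v :: "real^'m::finite"
  assumes h: "0 < h" and q: "0 < 1 - 2 * a * h"
  shows "(\<integral>\<^sup>+ x. ennreal (\<Prod>j\<in>UNIV. normal_density 0 (sqrt h) (x $ j)) * ennreal (exp (a * (norm x)\<^sup>2 + inner v x)) \<partial>lborel)
       = ennreal (exp ((norm v)\<^sup>2 * h / (2 * (1 - 2 * a * h))) / sqrt (1 - 2 * a * h) ^ CARD('m))"
proof -
  define f where "f = (\<lambda>(b::real^'m) y. normal_density 0 (sqrt h) y * exp (a * y\<^sup>2 + inner v b * y))"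
  have sh: "0 < sqrt h" using h by simp
  have q': "0 < 1 - 2 * a * (sqrt h)\<^sup>2" using q h by simp
  have pt: "ennreal (\<Prod>j\<in>UNIV. normal_density 0 (sqrt h) (x $ j)) * ennreal (exp (a * (norm x)\<^sup>2 + inner v x))
        = ennreal (\<Prod>b\<in>Basis. f b (inner x b))" for x :: "real^'m"
  proof -
    have n2: "(norm x)\<^sup>2 = (\<Sum>i\<in>UNIV. (x $ i)\<^sup>2)"
      unfolding power2_norm_eq_inner inner_vec_def by (simp add: power2_eq_square)
    have iv: "inner v x = (\<Sum>i\<in>UNIV. v $ i * x $ i)"
      by (simp add: inner_vec_def)
    have "exp (a * (norm x)\<^sup>2 + inner v x) = (\<Prod>i\<in>UNIV. exp (a * (x $ i)\<^sup>2 + v $ i * x $ i))"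
      unfolding n2 iv sum_distrib_left sum.distrib[symmetric] by (simp add: exp_sum)
    hence "(\<Prod>j\<in>UNIV. normal_density 0 (sqrt h) (x $ j)) * exp (a * (norm x)\<^sup>2 + inner v x)
        = (\<Prod>i\<in>UNIV. f (axis i 1) (inner x (axis i 1)))"
      by (simp add: f_def prod.distrib inner_axis)
    thus ?thesis
      by (simp add: prod_Basis_vec ennreal_mult'[symmetric] prod_nonneg)
  qed
  have "(\<integral>\<^sup>+ x. ennreal (\<Prod>b\<in>Basis. f b (inner x b)) \<partial>lborel) = (\<integral>\<^sup>+ x. (\<Prod>b\<in>Basis. ennreal (f b (inner x b))) \<partial>lborel)"
    by (simp add: prod_ennreal f_def)
  also have "\<dots> = (\<Prod>b\<in>Basis. (\<integral>\<^sup>+ y. ennreal (f b y) \<partial>lborel))"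
    by (rule nn_integral_lborel_prod) (auto simp: f_def)
  also have "\<dots> = (\<Prod>b\<in>Basis. ennreal (exp ((inner v b)\<^sup>2 * h / (2 * (1 - 2 * a * h))) / sqrt (1 - 2 * a * h)))"
    unfolding f_def using gauss1[OF sh q'] h by simp
  also have "\<dots> = ennreal (\<Prod>b\<in>Basis. exp ((inner v b)\<^sup>2 * h / (2 * (1 - 2 * a * h))) / sqrt (1 - 2 * a * h))"
    by (rule prod_ennreal) (use q in simp)
  also have "(\<Prod>b\<in>Basis. exp ((inner v b)\<^sup>2 * h / (2 * (1 - 2 * a * h))) / sqrt (1 - 2 * a * h))
      = exp ((norm v)\<^sup>2 * h / (2 * (1 - 2 * a * h))) / sqrt (1 - 2 * a * h) ^ CARD('m)"
  proof -
    have n2: "(norm v)\<^sup>2 = (\<Sum>i\<in>UNIV. (v $ i)\<^sup>2)"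
      unfolding power2_norm_eq_inner inner_vec_def by (simp add: power2_eq_square)
    show ?thesis
      unfolding prod_Basis_vec n2 prod_dividef
      by (simp add: inner_axis exp_sum[symmetric] sum_divide_distrib[symmetric] sum_distrib_right[symmetric])
  qed
  finally show ?thesis unfolding pt .
qed

lemma measurable_sub:
  assumes "f \<in> measurable F N" "space F = space M" "sets F \<subseteq> sets M"
  shows "f \<in> measurable M N"
  using assms unfolding measurable_def by auto

lemma indep_fubini:
  fixes Z :: "'a \<Rightarrow> 'b::second_countable_topology" and X :: "'a \<Rightarrow> 'c::euclidean_space"
    and g :: "'b \<times> 'c \<Rightarrow> ennreal"
  assumes P: "prob_space M"
    and Fs: "space Fs = space M" "sets Fs \<subseteq> sets M"
    and Z: "Z \<in> borel_measurable Fs"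
    and D: "distributed M lborel X f"
    and I: "\<forall>A\<in>sets Fs. \<forall>B\<in>sets borel.
           measure M (A \<inter> (X -` B \<inter> space M)) = measure M A * measure M (X -` B \<inter> space M)"
    and g: "g \<in> borel_measurable (borel \<Otimes>\<^sub>M borel)"
  shows "(\<integral>\<^sup>+ \<omega>. g (Z \<omega>, X \<omega>) \<partial>M) = (\<integral>\<^sup>+ \<omega>. (\<integral>\<^sup>+ x. f x * g (Z \<omega>, x) \<partial>lborel) \<partial>M)"
proof -
  interpret prob_space M by fact
  have ZM: "Z \<in> borel_measurable M" using measurable_sub[OF Z Fs] .
  have XM: "X \<in> measurable M lborel" using D by (simp add: distributed_def)
  have XMb: "X \<in> borel_measurable M" using XM by simp
  have fM: "f \<in> borel_measurable lborel" using D by (simp add: distributed_def)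
  have PXeq: "distr M lborel X = density lborel f" using D by (simp add: distributed_def)
  define PZ where "PZ = distr M borel Z"
  define PX where "PX = distr M lborel X"
  have pZ: "prob_space PZ" unfolding PZ_def by (rule prob_space_distr[OF ZM])
  have pX: "prob_space PX" unfolding PX_def by (rule prob_space_distr[OF XM])
  interpret PZ: prob_space PZ by fact
  interpret PX: prob_space PX by fact
  interpret PP: pair_sigma_finite PZ PX ..
  have gM: "g \<in> borel_measurable (PZ \<Otimes>\<^sub>M PX)"
    using g by (simp add: PZ_def PX_def cong: measurable_cong_sets)
  have ZXM: "(\<lambda>\<omega>. (Z \<omega>, X \<omega>)) \<in> measurable M (PZ \<Otimes>\<^sub>M PX)"
    using ZM XMb by (simp add: PZ_def PX_def cong: measurable_cong_sets)
  have eq: "PZ \<Otimes>\<^sub>M PX = distr M (PZ \<Otimes>\<^sub>M PX) (\<lambda>\<omega>. (Z \<omega>, X \<omega>))"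
  proof (rule pair_measure_eqI)
    show "sigma_finite_measure PZ" "sigma_finite_measure PX" by unfold_locales
    show "sets (PZ \<Otimes>\<^sub>M PX) = sets (distr M (PZ \<Otimes>\<^sub>M PX) (\<lambda>\<omega>. (Z \<omega>, X \<omega>)))" by simp
  next
    fix A B assume A: "A \<in> sets PZ" and B: "B \<in> sets PX"
    have A': "A \<in> sets borel" using A by (simp add: PZ_def)
    have B': "B \<in> sets borel" using B by (simp add: PX_def)
    have ZA: "Z -` A \<inter> space M \<in> sets Fs"
      using measurable_sets[OF Z A'] Fs by simp
    have "(\<lambda>\<omega>. (Z \<omega>, X \<omega>)) -` (A \<times> B) \<inter> space M = (Z -` A \<inter> space M) \<inter> (X -` B \<inter> space M)"
      by auto
    hence "emeasure (distr M (PZ \<Otimes>\<^sub>M PX) (\<lambda>\<omega>. (Z \<omega>, X \<omega>))) (A \<times> B)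
        = emeasure M ((Z -` A \<inter> space M) \<inter> (X -` B \<inter> space M))"
      using ZXM A B by (simp add: emeasure_distr)
    also have "\<dots> = ennreal (measure M (Z -` A \<inter> space M) * measure M (X -` B \<inter> space M))"
      using I ZA B' by (simp add: emeasure_eq_measure)
    also have "\<dots> = emeasure PZ A * emeasure PX B"
      using A B ZM XM
      by (simp add: PZ_def PX_def emeasure_distr emeasure_eq_measure ennreal_mult')
    finally show "emeasure PZ A * emeasure PX B = emeasure (distr M (PZ \<Otimes>\<^sub>M PX) (\<lambda>\<omega>. (Z \<omega>, X \<omega>))) (A \<times> B)"
      by simp
  qed
  have "(\<integral>\<^sup>+ \<omega>. g (Z \<omega>, X \<omega>) \<partial>M) = integral\<^sup>N (distr M (PZ \<Otimes>\<^sub>M PX) (\<lambda>\<omega>. (Z \<omega>, X \<omega>))) g"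
    using gM ZXM by (simp add: nn_integral_distr)
  also have "\<dots> = integral\<^sup>N (PZ \<Otimes>\<^sub>M PX) g" using eq by simp
  also have "\<dots> = (\<integral>\<^sup>+ z. \<integral>\<^sup>+ x. g (z, x) \<partial>PX \<partial>PZ)"
    using PX.nn_integral_fst[OF gM] by simp
  also have "\<dots> = (\<integral>\<^sup>+ \<omega>. (\<integral>\<^sup>+ x. g (Z \<omega>, x) \<partial>PX) \<partial>M)"
    unfolding PZ_def
    by (rule nn_integral_distr[OF ZM]) (use PX.borel_measurable_nn_integral_fst[OF gM] in \<open>simp add: PZ_def\<close>)
  also have "\<dots> = (\<integral>\<^sup>+ \<omega>. (\<integral>\<^sup>+ x. f x * g (Z \<omega>, x) \<partial>lborel) \<partial>M)"
  proof (rule nn_integral_cong)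
    fix \<omega> assume "\<omega> \<in> space M"
    have gl: "(\<lambda>x. g (Z \<omega>, x)) \<in> borel_measurable lborel"
      using g by (simp cong: measurable_cong_sets)
    show "(\<integral>\<^sup>+ x. g (Z \<omega>, x) \<partial>PX) = (\<integral>\<^sup>+ x. f x * g (Z \<omega>, x) \<partial>lborel)"
      unfolding PX_def PXeq by (rule nn_integral_density[OF fM gl])
  qed
  finally show ?thesis .
qed

lemma step_bound:
  fixes X :: "'a \<Rightarrow> real^'m::finite" and G :: "'a \<Rightarrow> real" and V :: "'a \<Rightarrow> real^'m"
  assumes P: "prob_space M"
    and Fs: "space Fs = space M" "sets Fs \<subseteq> sets M"
    and GM: "G \<in> borel_measurable Fs" and VM: "V \<in> borel_measurable Fs"
    and G0: "\<And>\<omega>. \<omega> \<in> space M \<Longrightarrow> 0 \<le> G \<omega>"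
    and VK: "\<And>\<omega>. \<omega> \<in> space M \<Longrightarrow> norm (V \<omega>) \<le> K"
    and h: "0 < h" and q: "0 < 1 - 2 * a * h"
    and D: "distributed M lborel X (\<lambda>x. ennreal (\<Prod>j\<in>UNIV. normal_density 0 (sqrt h) (x $ j)))"
    and I: "\<forall>A\<in>sets Fs. \<forall>B\<in>sets borel.
           measure M (A \<inter> (X -` B \<inter> space M)) = measure M A * measure M (X -` B \<inter> space M)"
  shows "(\<integral>\<^sup>+ \<omega>. ennreal (G \<omega> * exp (a * (norm (X \<omega>))\<^sup>2 + inner (V \<omega>) (X \<omega>))) \<partial>M)
     \<le> ennreal (exp (K\<^sup>2 * h / (2 * (1 - 2 * a * h))) / sqrt (1 - 2 * a * h) ^ CARD('m)) * (\<integral>\<^sup>+ \<omega>. ennreal (G \<omega>) \<partial>M)"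
proof -
  define g where "g = (\<lambda>p :: (real \<times> (real^'m)) \<times> (real^'m). ennreal (fst (fst p) * exp (a * (norm (snd p))\<^sup>2 + inner (snd (fst p)) (snd p))))"
  have gr: "(\<lambda>p :: (real \<times> (real^'m)) \<times> (real^'m). fst (fst p) * exp (a * (norm (snd p))\<^sup>2 + inner (snd (fst p)) (snd p))) \<in> borel_measurable borel"
    by (intro borel_measurable_continuous_onI continuous_intros)
  have gM: "g \<in> borel_measurable (borel \<Otimes>\<^sub>M borel)" unfolding g_def borel_prod
    using gr by measurable
  have ZM: "(\<lambda>\<omega>. (G \<omega>, V \<omega>)) \<in> borel_measurable Fs" using GM VM by measurable
  define C where "C = exp (K\<^sup>2 * h / (2 * (1 - 2 * a * h))) / sqrt (1 - 2 * a * h) ^ CARD('m)"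
  have "(\<integral>\<^sup>+ \<omega>. ennreal (G \<omega> * exp (a * (norm (X \<omega>))\<^sup>2 + inner (V \<omega>) (X \<omega>))) \<partial>M)
     = (\<integral>\<^sup>+ \<omega>. g ((G \<omega>, V \<omega>), X \<omega>) \<partial>M)" by (simp add: g_def)
  also have "\<dots> = (\<integral>\<^sup>+ \<omega>. (\<integral>\<^sup>+ x. ennreal (\<Prod>j\<in>UNIV. normal_density 0 (sqrt h) (x $ j)) * g ((G \<omega>, V \<omega>), x) \<partial>lborel) \<partial>M)"
    by (rule indep_fubini[OF P Fs ZM D I gM])
  also have "\<dots> \<le> (\<integral>\<^sup>+ \<omega>. ennreal C * ennreal (G \<omega>) \<partial>M)"
  proof (rule nn_integral_mono)
    fix \<omega> assume \<omega>: "\<omega> \<in> space M"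
    have "(\<integral>\<^sup>+ x. ennreal (\<Prod>j\<in>UNIV. normal_density 0 (sqrt h) (x $ j)) * g ((G \<omega>, V \<omega>), x) \<partial>lborel)
        = (\<integral>\<^sup>+ x. ennreal (G \<omega>) * (ennreal (\<Prod>j\<in>UNIV. normal_density 0 (sqrt h) (x $ j)) * ennreal (exp (a * (norm x)\<^sup>2 + inner (V \<omega>) x))) \<partial>lborel)"
      using G0[OF \<omega>] by (intro nn_integral_cong) (simp add: g_def ennreal_mult' mult_ac)
    also have "\<dots> = ennreal (G \<omega>) * ennreal (exp ((norm (V \<omega>))\<^sup>2 * h / (2 * (1 - 2 * a * h))) / sqrt (1 - 2 * a * h) ^ CARD('m))"
      by (subst nn_integral_cmult) (auto simp: gaussN[OF h q])
    also have "\<dots> \<le> ennreal (G \<omega>) * ennreal C"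
    proof -
      have "(norm (V \<omega>))\<^sup>2 \<le> K\<^sup>2"
        using VK[OF \<omega>] by (intro power_mono) auto
      hence "exp ((norm (V \<omega>))\<^sup>2 * h / (2 * (1 - 2 * a * h))) \<le> exp (K\<^sup>2 * h / (2 * (1 - 2 * a * h)))"
        using h q by (simp add: divide_right_mono mult_right_mono)
      hence "exp ((norm (V \<omega>))\<^sup>2 * h / (2 * (1 - 2 * a * h))) / sqrt (1 - 2 * a * h) ^ CARD('m) \<le> C"
        unfolding C_def using q by (intro divide_right_mono) auto
      thus ?thesis by (intro mult_left_mono ennreal_leI) auto
    qed
    finally show "(\<integral>\<^sup>+ x. ennreal (\<Prod>j\<in>UNIV. normal_density 0 (sqrt h) (x $ j)) * g ((G \<omega>, V \<omega>), x) \<partial>lborel) \<le> ennreal C * ennreal (G \<omega>)"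
      by (simp add: mult.commute C_def)
  qed
  also have "\<dots> = ennreal C * (\<integral>\<^sup>+ \<omega>. ennreal (G \<omega>) \<partial>M)"
    using measurable_sub[OF GM Fs] by (simp add: nn_integral_cmult)
  finally show ?thesis unfolding C_def .
qed

locale sde_setting =
  fixes M :: "'a measure" and T c :: real and F :: "real \<Rightarrow> 'a measure"
    and W :: "real \<Rightarrow> 'a \<Rightarrow> real^'m::finite" and \<xi> :: "'a \<Rightarrow> real^'d::finite"
    and \<mu> :: "real^'d \<Rightarrow> real^'d" and \<mu>' :: "real^'d \<Rightarrow> ((real^'d) \<Rightarrow>\<^sub>L (real^'d))"
    and \<sigma> :: "real^'d \<Rightarrow> ((real^'m) \<Rightarrow>\<^sub>L (real^'d))"
  assumes P: "prob_space M"
    and Tpos: "0 < T"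
    and NF: "normal_filtration M T F"
    and BM: "std_brownian_motion M T F W"
    and xiM: "\<xi> \<in> borel_measurable (F 0)"
    and xmom: "\<forall>p\<ge>1. (\<integral>\<^sup>+ \<omega>. ennreal (norm (\<xi> \<omega>) powr p) \<partial>M) < \<infinity>"
    and cpos: "0 < c"
    and mu_der: "\<forall>x. (\<mu> has_derivative blinfun_apply (\<mu>' x)) (at x)"
    and sig_lip: "\<forall>x y. norm (\<sigma> x - \<sigma> y) \<le> c * norm (x - y)"
begin

definition tt :: "nat \<Rightarrow> nat \<Rightarrow> real" where "tt N k = real k * T / real N"

abbreviation Y where "Y N k \<equiv> tamed_euler T \<mu> \<sigma> W \<xi> N k"

definition V :: "real^'d \<Rightarrow> real^'m" where
  "V y = (if 1 \<le> norm y then (\<chi> j. inner y (blinfun_apply (\<sigma> y) (axis j 1))) /\<^sub>R (norm y)\<^sup>2 else 0)"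

definition Phi :: "nat \<Rightarrow> (real^'d) \<times> (real^'m) \<Rightarrow> real^'d" where
  "Phi N p = fst p + ((T / real N) / (1 + (T / real N) * norm (\<mu> (fst p)))) *\<^sub>R \<mu> (fst p) + blinfun_apply (\<sigma> (fst p)) (snd p)"

lemma FF: "t \<in> {0..T} \<Longrightarrow> space (F t) = space M \<and> sets (F t) \<subseteq> sets M"
  using conjunct1[OF NF[unfolded normal_filtration_def]] by (rule bspec)

lemma Fmono: "0 \<le> s \<Longrightarrow> s \<le> t \<Longrightarrow> t \<le> T \<Longrightarrow> sets (F s) \<subseteq> sets (F t)"
  using conjunct1[OF conjunct2[OF NF[unfolded normal_filtration_def]]] by simp

lemma meas_mono:
  assumes "f \<in> measurable (F s) N'" "0 \<le> s" "s \<le> t" "t \<le> T"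
  shows "f \<in> measurable (F t) N'"
proof -
  have s: "s \<in> {0..T}" and t: "t \<in> {0..T}" using assms by auto
  have "space (F s) = space (F t)" using conjunct1[OF FF[OF s]] conjunct1[OF FF[OF t]] by simp
  thus ?thesis by (rule measurable_sub[OF assms(1) _ Fmono[OF assms(2-4)]])
qed

lemma W_meas: "t \<in> {0..T} \<Longrightarrow> W t \<in> borel_measurable (F t)"
  using conjunct1[OF conjunct2[OF conjunct2[OF BM[unfolded std_brownian_motion_def]]]] by (rule bspec)

lemma tt_range: "1 \<le> N \<Longrightarrow> k \<le> N \<Longrightarrow> 0 \<le> tt N k \<and> tt N k \<le> T"
  using Tpos by (auto simp: tt_def field_simps)

lemma tt_mono: "j \<le> k \<Longrightarrow> tt N j \<le> tt N k"
  using Tpos by (auto simp: tt_def divide_right_mono mult_right_mono)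

lemma dW_eq: "dW T W N k = (\<lambda>\<omega>. W (tt N (Suc k)) \<omega> - W (tt N k) \<omega>)"
  by (auto simp: dW_def tt_def fun_eq_iff)

lemma dW_meas: assumes "1 \<le> N" "k < N" shows "dW T W N k \<in> borel_measurable (F (tt N (Suc k)))"
proof -
  have r1: "0 \<le> tt N k" "tt N k \<le> tt N (Suc k)" "tt N (Suc k) \<le> T"
    using tt_range[OF assms(1), of k] tt_range[OF assms(1), of "Suc k"] tt_mono[of k "Suc k" N] assms by auto
  have a: "W (tt N (Suc k)) \<in> borel_measurable (F (tt N (Suc k)))" using W_meas r1 by auto
  have b: "W (tt N k) \<in> borel_measurable (F (tt N (Suc k)))"
    using meas_mono[OF W_meas[of "tt N k"], of "tt N (Suc k)"] r1 by auto
  show ?thesis unfolding dW_eq by (rule borel_measurable_diff[OF a b])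
qed

lemma mu_cont: "continuous_on UNIV \<mu>"
proof (rule continuous_at_imp_continuous_on, rule ballI)
  fix x show "isCont \<mu> x" using has_derivative_continuous[OF mu_der[rule_format, of x]] .
qed

lemma sig_cont: "continuous_on UNIV \<sigma>"
  unfolding continuous_on_iff
proof (intro ballI allI impI)
  fix x :: "real^'d" and e :: real assume e: "0 < e"
  show "\<exists>d>0. \<forall>x'\<in>UNIV. dist x' x < d \<longrightarrow> dist (\<sigma> x') (\<sigma> x) < e"
  proof (intro exI[of _ "e / c"] conjI ballI impI)
    show "0 < e / c" using e cpos by simp
    fix x' assume "dist x' x < e / c"
    hence "c * dist x' x < e" using cpos by (simp add: field_simps)
    moreover have "dist (\<sigma> x') (\<sigma> x) \<le> c * dist x' x"
      using sig_lip by (simp add: dist_norm)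
    ultimately show "dist (\<sigma> x') (\<sigma> x) < e" by linarith
  qed
qed

end

context sde_setting begin

lemma mu_cont_on[continuous_intros]: "continuous_on S f \<Longrightarrow> continuous_on S (\<lambda>x. \<mu> (f x))"
  by (rule continuous_on_compose2[OF mu_cont]) auto

lemma sig_cont_on[continuous_intros]: "continuous_on S f \<Longrightarrow> continuous_on S (\<lambda>x. \<sigma> (f x))"
  by (rule continuous_on_compose2[OF sig_cont]) auto

lemma Phi_meas: "Phi N \<in> borel_measurable borel"
proof -
  have h: "0 \<le> T / real N" using Tpos by simp
  have den: "1 + T / real N * norm z \<noteq> 0" for z :: "real^'d"
  proof -
    have "0 \<le> T / real N * norm z" using h by (intro mult_nonneg_nonneg) auto
    thus ?thesis by linarith
  qed
  have "continuous_on UNIV (Phi N)"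
    unfolding Phi_def by (intro continuous_intros blinfun.continuous_on) (use den in auto)
  thus ?thesis by (rule borel_measurable_continuous_onI)
qed

lemma Y_Suc: "Y N (Suc k) = (\<lambda>\<omega>. Phi N (Y N k \<omega>, dW T W N k \<omega>))"
  by (simp add: Phi_def Let_def fun_eq_iff)

lemma Y_0: "Y N 0 = \<xi>" by (simp add: fun_eq_iff)

lemma Y_meas: "1 \<le> N \<Longrightarrow> k \<le> N \<Longrightarrow> Y N k \<in> borel_measurable (F (tt N k))"
proof (induction k)
  case 0
  then show ?case using xiM by (simp add: Y_0 tt_def)
next
  case (Suc k)
  have r1: "0 \<le> tt N k" "tt N k \<le> tt N (Suc k)" "tt N (Suc k) \<le> T"
    using tt_range[OF Suc.prems(1), of k] tt_range[OF Suc.prems(1), of "Suc k"] tt_mono[of k "Suc k" N] Suc.prems by auto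
  have a: "Y N k \<in> borel_measurable (F (tt N (Suc k)))"
    using meas_mono[OF Suc.IH[OF Suc.prems(1)], of "tt N (Suc k)"] r1 Suc.prems by simp
  have b: "dW T W N k \<in> borel_measurable (F (tt N (Suc k)))"
    using dW_meas Suc.prems by simp
  have ab: "(\<lambda>\<omega>. (Y N k \<omega>, dW T W N k \<omega>)) \<in> measurable (F (tt N (Suc k))) (borel \<Otimes>\<^sub>M borel)"
    using a b by (rule measurable_Pair)
  have "(\<lambda>\<omega>. Phi N (Y N k \<omega>, dW T W N k \<omega>)) \<in> borel_measurable (F (tt N (Suc k)))"
    using measurable_compose[OF ab, of "Phi N" borel] Phi_meas by (simp add: borel_prod)
  thus ?case by (simp add: Y_Suc)
qed

definition vv :: "real^'d \<Rightarrow> real^'m" where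
  "vv y = (\<chi> j. inner y (blinfun_apply (\<sigma> y) (axis j 1)))"

lemma inner_vv: "inner (vv y) x = inner y (blinfun_apply (\<sigma> y) x)"
proof -
  have "x = (\<Sum>i\<in>UNIV. x $ i *\<^sub>R axis i 1)"
    using basis_expansion[of x] by (simp add: scalar_mult_eq_scaleR)
  hence "inner y (blinfun_apply (\<sigma> y) x) = inner y (blinfun_apply (\<sigma> y) (\<Sum>i\<in>UNIV. x $ i *\<^sub>R axis i 1))"
    by simp
  also have "\<dots> = (\<Sum>i\<in>UNIV. x $ i * inner y (blinfun_apply (\<sigma> y) (axis i 1)))"
    by (simp add: blinfun.sum_right blinfun.scaleR_right inner_sum_right)
  also have "\<dots> = inner (vv y) x"
    by (simp add: vv_def inner_vec_def mult.commute)
  finally show ?thesis by simp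
qed

lemma V_eq: "V y = (if 1 \<le> norm y then vv y /\<^sub>R (norm y)\<^sup>2 else 0)"
  by (simp add: V_def vv_def)

lemma vv_cont: "continuous_on UNIV vv"
  unfolding vv_def by (intro continuous_intros blinfun.continuous_on)

lemma V_meas: "V \<in> borel_measurable borel"
proof -
  have [measurable]: "vv \<in> borel_measurable borel" using vv_cont by (rule borel_measurable_continuous_onI)
  show ?thesis unfolding V_eq[abs_def] by measurable
qed

lemma sig_bound: "norm (\<sigma> y) \<le> norm (\<sigma> 0) + c * norm y"
proof -
  have "norm (\<sigma> y) \<le> norm (\<sigma> 0) + norm (\<sigma> y - \<sigma> 0)" by (rule norm_triangle_sub)
  also have "norm (\<sigma> y - \<sigma> 0) \<le> c * norm (y - 0)" using sig_lip by blast
  finally show ?thesis by simp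
qed

lemma V_bound: "norm (V y) \<le> norm (\<sigma> 0) + c"
proof (cases "1 \<le> norm y")
  case False
  then show ?thesis using cpos by (auto simp: V_eq)
next
  case True
  have ny: "0 < norm y" using True by linarith
  have "(norm (vv y))\<^sup>2 = inner y (blinfun_apply (\<sigma> y) (vv y))"
    by (simp add: inner_vv[symmetric] power2_norm_eq_inner)
  also have "\<dots> \<le> norm y * norm (blinfun_apply (\<sigma> y) (vv y))"
    by (rule order_trans[OF abs_ge_self Cauchy_Schwarz_ineq2])
  also have "\<dots> \<le> norm y * (norm (\<sigma> y) * norm (vv y))"
    by (intro mult_left_mono norm_blinfun) auto
  finally have "(norm (vv y))\<^sup>2 \<le> norm y * norm (\<sigma> y) * norm (vv y)" by (simp add: mult_ac)
  hence nv: "norm (vv y) \<le> norm y * norm (\<sigma> y)"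
    by (cases "norm (vv y) = 0") (auto simp: power2_eq_square)
  have "norm (V y) = norm (vv y) / (norm y)\<^sup>2" using True by (simp add: V_eq divide_inverse mult.commute)
  also have "\<dots> \<le> norm y * norm (\<sigma> y) / (norm y)\<^sup>2"
    using nv by (simp add: divide_right_mono)
  also have "\<dots> = norm (\<sigma> y) / norm y" using ny by (simp add: power2_eq_square)
  also have "\<dots> \<le> (norm (\<sigma> 0) + c * norm y) / norm y"
    using sig_bound ny by (simp add: divide_right_mono)
  also have "\<dots> = norm (\<sigma> 0) / norm y + c" using ny by (simp add: field_simps)
  also have "\<dots> \<le> norm (\<sigma> 0) + c"
    using True ny by (simp add: divide_le_eq mult_le_cancel_left1)
  finally show ?thesis .
qed

lemma alpha_eq: "alpha T \<mu> \<sigma> W \<xi> N k \<omega> = inner (V (Y N k \<omega>)) (dW T W N k \<omega>)"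
proof -
  define y where "y = Y N k \<omega>"
  define x where "x = dW T W N k \<omega>"
  have "alpha T \<mu> \<sigma> W \<xi> N k \<omega> = (if 1 \<le> norm y then inner (y /\<^sub>R norm y) (blinfun_apply (\<sigma> y) x /\<^sub>R norm y) else 0)"
    by (simp add: alpha_def y_def x_def Let_def)
  also have "\<dots> = inner (V y) x"
    by (simp add: V_eq inner_vv power2_eq_square)
  finally show ?thesis by (simp add: y_def x_def)
qed

end

context sde_setting begin

abbreviation L where "L \<equiv> lam c T \<mu> \<sigma>"
abbreviation K where "K \<equiv> norm (\<sigma> 0) + c"

definition incr :: "nat \<Rightarrow> nat \<Rightarrow> 'a \<Rightarrow> real" where
  "incr N j \<omega> = L * (norm (dW T W N j \<omega>))\<^sup>2 + alpha T \<mu> \<sigma> W \<xi> N j \<omega>"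

definition SS :: "nat \<Rightarrow> nat \<Rightarrow> nat \<Rightarrow> 'a \<Rightarrow> real" where
  "SS N u k \<omega> = (\<Sum>j\<in>{u..<k}. incr N j \<omega>)"

lemma BM_incr:
  assumes "0 \<le> s" "s < t" "t \<le> T"
  shows "distributed M lborel (\<lambda>\<omega>. W t \<omega> - W s \<omega>)
          (\<lambda>x. ennreal (\<Prod>j\<in>UNIV. normal_density 0 (sqrt (t - s)) (x $ j)))"
    and "\<forall>A\<in>sets (F s). \<forall>B\<in>sets borel.
           measure M (A \<inter> ((\<lambda>\<omega>. W t \<omega> - W s \<omega>) -` B \<inter> space M)) =
           measure M A * measure M ((\<lambda>\<omega>. W t \<omega> - W s \<omega>) -` B \<inter> space M)"
proof -
  have H: "\<forall>s t. 0 \<le> s \<and> s < t \<and> t \<le> T \<longrightarrow>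
        distributed M lborel (\<lambda>\<omega>. W t \<omega> - W s \<omega>)
          (\<lambda>x. ennreal (\<Prod>j\<in>UNIV. normal_density 0 (sqrt (t - s)) (x $ j))) \<and>
        (\<forall>A\<in>sets (F s). \<forall>B\<in>sets borel.
           measure M (A \<inter> ((\<lambda>\<omega>. W t \<omega> - W s \<omega>) -` B \<inter> space M)) =
           measure M A * measure M ((\<lambda>\<omega>. W t \<omega> - W s \<omega>) -` B \<inter> space M))"
    using conjunct2[OF conjunct2[OF conjunct2[OF BM[unfolded std_brownian_motion_def]]]] .
  have "0 \<le> s \<and> s < t \<and> t \<le> T" using assms by simp
  from H[rule_format, OF this]
  show "distributed M lborel (\<lambda>\<omega>. W t \<omega> - W s \<omega>)
          (\<lambda>x. ennreal (\<Prod>j\<in>UNIV. normal_density 0 (sqrt (t - s)) (x $ j)))"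
    and "\<forall>A\<in>sets (F s). \<forall>B\<in>sets borel.
           measure M (A \<inter> ((\<lambda>\<omega>. W t \<omega> - W s \<omega>) -` B \<inter> space M)) =
           measure M A * measure M ((\<lambda>\<omega>. W t \<omega> - W s \<omega>) -` B \<inter> space M)"
    by auto
qed

lemma tt_diff: "1 \<le> N \<Longrightarrow> tt N (Suc k) - tt N k = T / real N"
  by (simp add: tt_def field_simps)

lemma dW_dist:
  assumes "1 \<le> N" "k < N"
  shows "distributed M lborel (dW T W N k)
          (\<lambda>x. ennreal (\<Prod>j\<in>UNIV. normal_density 0 (sqrt (T / real N)) (x $ j)))"
    and "\<forall>A\<in>sets (F (tt N k)). \<forall>B\<in>sets borel.
           measure M (A \<inter> (dW T W N k -` B \<inter> space M)) =
           measure M A * measure M (dW T W N k -` B \<inter> space M)"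
proof -
  have r: "0 \<le> tt N k" "tt N k < tt N (Suc k)" "tt N (Suc k) \<le> T"
    using tt_range[OF assms(1), of k] tt_range[OF assms(1), of "Suc k"] assms Tpos
    by (auto simp: tt_def field_simps)
  show "distributed M lborel (dW T W N k)
          (\<lambda>x. ennreal (\<Prod>j\<in>UNIV. normal_density 0 (sqrt (T / real N)) (x $ j)))"
    using BM_incr(1)[OF r] unfolding dW_eq tt_diff[OF assms(1)] .
  show "\<forall>A\<in>sets (F (tt N k)). \<forall>B\<in>sets borel.
           measure M (A \<inter> (dW T W N k -` B \<inter> space M)) =
           measure M A * measure M (dW T W N k -` B \<inter> space M)"
    using BM_incr(2)[OF r] unfolding dW_eq .
qed

lemma incr_eq: "incr N j \<omega> = L * (norm (dW T W N j \<omega>))\<^sup>2 + inner (V (Y N j \<omega>)) (dW T W N j \<omega>)"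
  by (simp add: incr_def alpha_eq)

lemma incr_meas:
  assumes "1 \<le> N" "j < k" "k \<le> N"
  shows "incr N j \<in> borel_measurable (F (tt N k))"
proof -
  have r: "0 \<le> tt N j" "tt N j \<le> tt N (Suc j)" "tt N (Suc j) \<le> tt N k" "tt N k \<le> T"
    using tt_range[OF assms(1), of j] tt_range[OF assms(1), of k] tt_mono[of j "Suc j" N] tt_mono[of "Suc j" k N] assms
    by auto
  have y: "Y N j \<in> borel_measurable (F (tt N (Suc j)))"
    using meas_mono[OF Y_meas[OF assms(1), of j], of "tt N (Suc j)"] r assms by simp
  have [measurable]: "Y N j \<in> borel_measurable (F (tt N k))"
    using meas_mono[OF y, of "tt N k"] r by simp
  have [measurable]: "dW T W N j \<in> borel_measurable (F (tt N k))"
    using meas_mono[OF dW_meas[OF assms(1), of j], of "tt N k"] r assms by simp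
  have [measurable]: "V \<in> borel_measurable borel" by (rule V_meas)
  show ?thesis unfolding incr_eq[abs_def] by measurable
qed

lemma SS_meas:
  assumes "1 \<le> N" "k \<le> N"
  shows "SS N u k \<in> borel_measurable (F (tt N k))"
  unfolding SS_def[abs_def]
  by (rule borel_measurable_sum) (use incr_meas assms in auto)

end

lemma C_bound:
  fixes h a w :: real and m :: nat
  assumes h: "0 < h" and a: "0 \<le> a" and ah: "2 * a * h \<le> 1/2"
  shows "exp (w\<^sup>2 * h / (2 * (1 - 2 * a * h))) / sqrt (1 - 2 * a * h) ^ m \<le> exp (h * (w\<^sup>2 + 2 * a * real m))"
proof -
  define q where "q = 1 - 2 * a * h"
  have q1: "1/2 \<le> q" "q \<le> 1" using ah a h by (auto simp: q_def)
  have e1: "exp (w\<^sup>2 * h / (2 * q)) \<le> exp (w\<^sup>2 * h)"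
  proof -
    have w0: "0 \<le> w\<^sup>2 * h" using h by simp
    have "w\<^sup>2 * h * 1 \<le> w\<^sup>2 * h * (2 * q)" by (rule mult_left_mono[OF _ w0]) (use q1 in auto)
    hence "w\<^sup>2 * h / (2 * q) \<le> w\<^sup>2 * h"
      using q1 by (simp add: divide_le_eq)
    thus ?thesis by simp
  qed
  have iq: "1 / q \<le> exp (2 * (1 - q))"
  proof -
    have pq: "0 \<le> (2 * q - 1) * (1 - q)" by (rule mult_nonneg_nonneg) (use q1 in auto)
    have "1 \<le> (1 + 2 * (1 - q)) * q" using pq by (simp add: algebra_simps)
    hence "1 / q \<le> 1 + 2 * (1 - q)"
      using q1 by (simp add: divide_le_eq)
    also have "\<dots> \<le> exp (2 * (1 - q))" by (rule exp_ge_add_one_self)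
    finally show ?thesis .
  qed
  have isq: "1 / sqrt q \<le> exp (1 - q)"
  proof -
    have "1 / sqrt q = sqrt (1 / q)" by (simp add: real_sqrt_divide)
    also have "\<dots> \<le> sqrt (exp (2 * (1 - q)))" using iq by simp
    also have "\<dots> = exp (1 - q)"
      by (rule real_sqrt_unique) (simp_all only: exp_double[symmetric] exp_ge_zero)
    finally show ?thesis .
  qed
  have "1 / sqrt q ^ m \<le> exp (1 - q) ^ m"
    using isq q1 by (simp add: power_one_over[symmetric] power_mono)
  also have "\<dots> = exp (2 * a * h * real m)" by (simp add: q_def exp_of_nat_mult[symmetric] mult_ac)
  finally have e2: "1 / sqrt q ^ m \<le> exp (2 * a * h * real m)" .
  have "exp (w\<^sup>2 * h / (2 * q)) / sqrt q ^ m = exp (w\<^sup>2 * h / (2 * q)) * (1 / sqrt q ^ m)" by simp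
  also have "\<dots> \<le> exp (w\<^sup>2 * h) * exp (2 * a * h * real m)"
    by (rule mult_mono[OF e1 e2]) (use q1 in auto)
  also have "\<dots> = exp (h * (w\<^sup>2 + 2 * a * real m))" by (simp add: exp_add[symmetric] algebra_simps)
  finally show ?thesis by (simp add: q_def)
qed

lemma exp_lin_meas: "(\<lambda>x::real. exp (\<theta> * x)) \<in> borel_measurable borel"
  by (intro borel_measurable_continuous_onI continuous_intros)

context sde_setting begin

lemma SS_Suc: "u \<le> k \<Longrightarrow> SS N u (Suc k) \<omega> = SS N u k \<omega> + incr N k \<omega>"
  by (simp add: SS_def)

lemma SS_same: "SS N u u \<omega> = 0" by (simp add: SS_def)

lemma exp_moment:
  assumes N: "1 \<le> N" and th: "0 \<le> \<theta>" and big: "4 * \<theta> * L * T \<le> real N"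
  shows "u \<le> k \<Longrightarrow> k \<le> N \<Longrightarrow> (\<integral>\<^sup>+ \<omega>. ennreal (exp (\<theta> * SS N u k \<omega>)) \<partial>M)
            \<le> ennreal (exp (T / real N * ((\<theta> * K)\<^sup>2 + 2 * (\<theta> * L) * real CARD('m))) ^ (k - u))"
proof (induction k)
  case 0
  interpret prob_space M by (rule P)
  show ?case using 0 by (simp add: SS_same emeasure_space_1)
next
  case (Suc k)
  interpret prob_space M by (rule P)
  define h where "h = T / real N"
  define B where "B = exp (h * ((\<theta> * K)\<^sup>2 + 2 * (\<theta> * L) * real CARD('m)))"
  show ?case
  proof (cases "u = Suc k")
    case True
    then show ?thesis by (simp add: SS_same emeasure_space_1)
  next
    case False
    hence uk: "u \<le> k" using Suc.prems by simp
    have kN: "k < N" using Suc.prems by simp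
    have IH: "(\<integral>\<^sup>+ \<omega>. ennreal (exp (\<theta> * SS N u k \<omega>)) \<partial>M) \<le> ennreal (B ^ (k - u))"
      using Suc.IH uk kN by (simp add: B_def h_def)
    have hpos: "0 < h" using Tpos N by (simp add: h_def)
    have L0: "0 \<le> L" by (simp add: lam_def)
    have ah: "2 * (\<theta> * L) * h \<le> 1/2"
    proof -
      have "4 * (\<theta> * L * T) \<le> real N" using big by (simp add: mult_ac)
      hence "2 * (\<theta> * L) * T / real N \<le> 1/2" using N by (simp add: divide_le_eq)
      thus ?thesis by (simp add: h_def)
    qed
    have q: "0 < 1 - 2 * (\<theta> * L) * h" using ah by simp
    have Fs: "space (F (tt N k)) = space M" "sets (F (tt N k)) \<subseteq> sets M"
      using FF[of "tt N k"] tt_range[OF N, of k] kN by auto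
    have GM: "(\<lambda>\<omega>. exp (\<theta> * SS N u k \<omega>)) \<in> borel_measurable (F (tt N k))"
    proof -
      have e: "(\<lambda>x. exp (\<theta> * x)) \<in> borel_measurable (borel :: real measure)"
        by (rule exp_lin_meas)
      show ?thesis using measurable_compose[OF SS_meas[OF N less_imp_le[OF kN], of u] e] .
    qed
    have VM: "(\<lambda>\<omega>. \<theta> *\<^sub>R V (Y N k \<omega>)) \<in> borel_measurable (F (tt N k))"
    proof -
      have e: "(\<lambda>y. \<theta> *\<^sub>R V y) \<in> borel_measurable borel"
        using borel_measurable_scaleR[OF borel_measurable_const V_meas] .
      show ?thesis using measurable_compose[OF Y_meas[OF N less_imp_le[OF kN]] e] .
    qed
    have VK: "norm (\<theta> *\<^sub>R V (Y N k \<omega>)) \<le> \<theta> * K" for \<omega>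
      using V_bound[of "Y N k \<omega>"] th by (simp add: mult_left_mono)
    have eq: "ennreal (exp (\<theta> * SS N u (Suc k) \<omega>)) =
        ennreal (exp (\<theta> * SS N u k \<omega>) * exp (\<theta> * L * (norm (dW T W N k \<omega>))\<^sup>2 + inner (\<theta> *\<^sub>R V (Y N k \<omega>)) (dW T W N k \<omega>)))" for \<omega>
    proof -
      have e1: "\<theta> * SS N u (Suc k) \<omega> = \<theta> * SS N u k \<omega> + (\<theta> * L * (norm (dW T W N k \<omega>))\<^sup>2 + inner (\<theta> *\<^sub>R V (Y N k \<omega>)) (dW T W N k \<omega>))"
        unfolding SS_Suc[OF uk] incr_eq inner_scaleR_left by (simp only: distrib_left mult.assoc)
      show ?thesis by (simp only: e1 exp_add)
    qed
    have "(\<integral>\<^sup>+ \<omega>. ennreal (exp (\<theta> * SS N u (Suc k) \<omega>)) \<partial>M)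
        = (\<integral>\<^sup>+ \<omega>. ennreal (exp (\<theta> * SS N u k \<omega>) * exp (\<theta> * L * (norm (dW T W N k \<omega>))\<^sup>2 + inner (\<theta> *\<^sub>R V (Y N k \<omega>)) (dW T W N k \<omega>))) \<partial>M)"
      by (simp add: eq)
    also have "\<dots> \<le> ennreal (exp ((\<theta> * K)\<^sup>2 * h / (2 * (1 - 2 * (\<theta> * L) * h))) / sqrt (1 - 2 * (\<theta> * L) * h) ^ CARD('m))
        * (\<integral>\<^sup>+ \<omega>. ennreal (exp (\<theta> * SS N u k \<omega>)) \<partial>M)"
      by (rule step_bound[OF P Fs GM VM _ VK hpos q dW_dist(1)[OF N kN, folded h_def] dW_dist(2)[OF N kN]]) simp
    also have "\<dots> \<le> ennreal B * ennreal (B ^ (k - u))"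
    proof (rule mult_mono[OF _ IH])
      show "ennreal (exp ((\<theta> * K)\<^sup>2 * h / (2 * (1 - 2 * (\<theta> * L) * h))) / sqrt (1 - 2 * (\<theta> * L) * h) ^ CARD('m)) \<le> ennreal B"
        unfolding B_def using C_bound[OF hpos _ ah, of "\<theta> * K" "CARD('m)"] th L0
        by (intro ennreal_leI) simp
    qed auto
    also have "\<dots> = ennreal (B ^ (Suc k - u))"
      using uk by (simp add: ennreal_mult'[symmetric] Suc_diff_le B_def)
    finally show ?thesis by (simp add: B_def h_def)
  qed
qed

end

lemma markov_real:
  assumes P: "prob_space M" and f: "f \<in> borel_measurable M"
    and I: "(\<integral>\<^sup>+ x. ennreal (f x) \<partial>M) \<le> ennreal C" and C: "0 \<le> C" and a: "0 < a"
  shows "measure M {x\<in>space M. a \<le> f x} \<le> C / a"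
proof -
  interpret prob_space M by (rule P)
  define A where "A = {x\<in>space M. a \<le> f x}"
  have A: "A \<in> sets M" unfolding A_def using f by measurable
  have "(\<integral>\<^sup>+ x. ennreal a * indicator A x \<partial>M) \<le> (\<integral>\<^sup>+ x. ennreal (f x) \<partial>M)"
  proof (rule nn_integral_mono)
    fix x assume "x \<in> space M"
    show "ennreal a * indicator A x \<le> ennreal (f x)"
      by (cases "x \<in> A") (auto simp: A_def ennreal_leI)
  qed
  also have "\<dots> \<le> ennreal C" by (rule I)
  finally have "ennreal a * emeasure M A \<le> ennreal C"
    using A by (simp add: nn_integral_cmult_indicator)
  hence "ennreal (a * measure M A) \<le> ennreal C"
    using a by (simp add: emeasure_eq_measure ennreal_mult')
  hence "a * measure M A \<le> C" using C by (simp add: ennreal_le_iff)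
  hence "measure M A \<le> C / a" using a by (simp add: field_simps)
  thus ?thesis by (simp add: A_def)
qed

lemma pow_exp_bound:
  fixes y :: real assumes "0 < n" "0 \<le> y"
  shows "y ^ n \<le> real n ^ n * exp y"
proof -
  have "(y / real n) ^ n \<le> (1 + y / real n) ^ n"
    using assms by (intro power_mono) auto
  also have "\<dots> \<le> exp y" using assms by (intro exp_ge_one_plus_x_over_n_power_n) auto
  finally have "(y / real n) ^ n \<le> exp y" .
  hence "real n ^ n * (y / real n) ^ n \<le> real n ^ n * exp y" by (intro mult_left_mono) auto
  thus ?thesis using assms by (simp add: power_divide)
qed

context sde_setting begin

lemma EW_bound:
  assumes N: "1 \<le> N" and kN: "k < N"
  shows "measure M {\<omega>\<in>space M. exp (real N / (4 * T)) \<le> exp (real N / (4 * T) * (norm (dW T W N k \<omega>))\<^sup>2)}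
     \<le> (1 / sqrt (1/2) ^ CARD('m)) / exp (real N / (4 * T))"
proof -
  define a where "a = real N / (4 * T)"
  define h where "h = T / real N"
  have hpos: "0 < h" using Tpos N by (simp add: h_def)
  have q': "1 - 2 * a * h = 1/2" using Tpos N by (simp add: a_def h_def field_simps)
  have q: "0 < 1 - 2 * a * h" using q' by simp
  have Fs: "space (F (tt N k)) = space M" "sets (F (tt N k)) \<subseteq> sets M"
    using FF[of "tt N k"] tt_range[OF N, of k] kN by auto
  have dWM: "dW T W N k \<in> borel_measurable M"
    using measurable_sub[OF dW_meas[OF N kN]] FF[of "tt N (Suc k)"] tt_range[OF N, of "Suc k"] kN by auto
  have "(\<integral>\<^sup>+ \<omega>. ennreal ((\<lambda>_. 1) \<omega> * exp (a * (norm (dW T W N k \<omega>))\<^sup>2 + inner ((\<lambda>_. 0) \<omega>) (dW T W N k \<omega>))) \<partial>M)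
     \<le> ennreal (exp (0\<^sup>2 * h / (2 * (1 - 2 * a * h))) / sqrt (1 - 2 * a * h) ^ CARD('m)) * (\<integral>\<^sup>+ \<omega>. ennreal ((\<lambda>_. 1) \<omega>) \<partial>M)"
    by (rule step_bound[OF P Fs _ _ _ _ hpos q dW_dist(1)[OF N kN, folded h_def] dW_dist(2)[OF N kN]]) auto
  hence I: "(\<integral>\<^sup>+ \<omega>. ennreal (exp (a * (norm (dW T W N k \<omega>))\<^sup>2)) \<partial>M) \<le> ennreal (1 / sqrt (1/2) ^ CARD('m))"
    using P by (simp add: q' prob_space.emeasure_space_1)
  have fM: "(\<lambda>\<omega>. exp (a * (norm (dW T W N k \<omega>))\<^sup>2)) \<in> borel_measurable M"
    using dWM by measurable
  show ?thesis
    using markov_real[OF P fM I _ exp_gt_zero] by (simp add: a_def)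
qed

lemma ES_bound:
  assumes N: "1 \<le> N" and th: "0 \<le> \<theta>" and big: "4 * \<theta> * L * T \<le> real N"
    and uk: "u \<le> k" and kN: "k \<le> N" and thr: "0 < thr"
  shows "measure M {\<omega>\<in>space M. thr \<le> exp (\<theta> * SS N u k \<omega>)}
     \<le> exp (T * ((\<theta> * K)\<^sup>2 + 2 * (\<theta> * L) * real CARD('m))) / thr"
proof -
  define \<beta> where "\<beta> = (\<theta> * K)\<^sup>2 + 2 * (\<theta> * L) * real CARD('m)"
  have L0: "0 \<le> L" by (simp add: lam_def)
  have b0: "0 \<le> \<beta>" unfolding \<beta>_def using th L0 by simp
  have h0: "0 \<le> T / real N" using Tpos by simp
  have e1: "1 \<le> exp (T / real N * \<beta>)" using mult_nonneg_nonneg[OF h0 b0] by simp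
  have "exp (T / real N * \<beta>) ^ (k - u) \<le> exp (T / real N * \<beta>) ^ N"
    by (rule power_increasing) (use e1 kN in auto)
  also have "\<dots> = exp (T * \<beta>)"
    using N by (simp add: exp_of_nat_mult[symmetric])
  finally have le: "exp (T / real N * \<beta>) ^ (k - u) \<le> exp (T * \<beta>)" .
  have I: "(\<integral>\<^sup>+ \<omega>. ennreal (exp (\<theta> * SS N u k \<omega>)) \<partial>M) \<le> ennreal (exp (T * \<beta>))"
    using exp_moment[OF N th big uk kN] le unfolding \<beta>_def[symmetric]
    by (meson ennreal_leI order_trans)
  have SM: "SS N u k \<in> borel_measurable M"
    using measurable_sub[OF SS_meas[OF N kN, of u]] FF[of "tt N k"] tt_range[OF N kN] by auto
  have fM: "(\<lambda>\<omega>. exp (\<theta> * SS N u k \<omega>)) \<in> borel_measurable M" using SM by measurable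
  show ?thesis using markov_real[OF P fM I _ thr] by (simp add: \<beta>_def)
qed

lemma xi_M: "\<xi> \<in> borel_measurable M"
  using measurable_sub[OF xiM] FF[of 0] Tpos by auto

lemma Exi_bound:
  assumes qx: "1 \<le> qx" and y: "0 < y"
  shows "measure M {\<omega>\<in>space M. y \<le> norm (\<xi> \<omega>)}
     \<le> enn2real (\<integral>\<^sup>+ \<omega>. ennreal (norm (\<xi> \<omega>) powr qx) \<partial>M) / y powr qx"
proof -
  have fin: "(\<integral>\<^sup>+ \<omega>. ennreal (norm (\<xi> \<omega>) powr qx) \<partial>M) < \<infinity>" using xmom qx by blast
  have I: "(\<integral>\<^sup>+ \<omega>. ennreal (norm (\<xi> \<omega>) powr qx) \<partial>M) \<le> ennreal (enn2real (\<integral>\<^sup>+ \<omega>. ennreal (norm (\<xi> \<omega>) powr qx) \<partial>M))"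
    using fin by simp
  have fM: "(\<lambda>\<omega>. norm (\<xi> \<omega>) powr qx) \<in> borel_measurable M" using xi_M by measurable
  have eq: "{\<omega>\<in>space M. y \<le> norm (\<xi> \<omega>)} = {\<omega>\<in>space M. y powr qx \<le> norm (\<xi> \<omega>) powr qx}"
  proof (intro Collect_cong conj_cong refl iffI)
    fix \<omega> assume "y \<le> norm (\<xi> \<omega>)"
    thus "y powr qx \<le> norm (\<xi> \<omega>) powr qx" using y qx by (intro powr_mono2) auto
  next
    fix \<omega> assume a: "y powr qx \<le> norm (\<xi> \<omega>) powr qx"
    show "y \<le> norm (\<xi> \<omega>)"
    proof (rule ccontr)
      assume "\<not> y \<le> norm (\<xi> \<omega>)"
      hence "norm (\<xi> \<omega>) powr qx < y powr qx" using y qx by (intro powr_less_mono2) auto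
      thus False using a by simp
    qed
  qed
  show ?thesis unfolding eq
    by (rule markov_real[OF P fM I enn2real_nonneg]) (use y in simp)
qed

end

context sde_setting begin

lemma Dn_eq: "Dn c T \<mu> \<sigma> W \<xi> N k \<omega> = (L + norm (\<xi> \<omega>)) * exp (L + Max ((\<lambda>u. SS N u k \<omega>) ` {0..k}))"
  by (simp add: Dn_def SS_def incr_def Let_def)

lemma incl:
  fixes N :: nat and \<theta> y :: real
  defines "r \<equiv> 1 / (2 * c)"
  assumes N: "1 \<le> N" and th: "0 < \<theta>" and Ly: "L \<le> y"
    and yd: "y = real N powr (r / 2) * exp (- L) / 2"
  shows "space M - OmegaN M c T \<mu> \<sigma> W \<xi> N N \<subseteq>
     {\<omega>\<in>space M. y \<le> norm (\<xi> \<omega>)}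
     \<union> (\<Union>k\<in>{..<N}. {\<omega>\<in>space M. exp (real N / (4 * T)) \<le> exp (real N / (4 * T) * (norm (dW T W N k \<omega>))\<^sup>2)})
     \<union> (\<Union>x\<in>{(u, k). u \<le> k \<and> k < N}. {\<omega>\<in>space M. exp (\<theta> * (r / 2 * ln (real N))) \<le> exp (\<theta> * SS N (fst x) (snd x) \<omega>)})"
proof
  fix \<omega> assume w: "\<omega> \<in> space M - OmegaN M c T \<mu> \<sigma> W \<xi> N N"
  hence wM: "\<omega> \<in> space M" by simp
  have Npos: "0 < real N" using N by simp
  from w have "\<not> ((\<forall>k<N. Dn c T \<mu> \<sigma> W \<xi> N k \<omega> \<le> real N powr (1 / (2 * c))) \<and> (\<forall>k<N. norm (dW T W N k \<omega>) \<le> 1))"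
    by (simp add: OmegaN_def)
  then consider k where "k < N" "real N powr r < Dn c T \<mu> \<sigma> W \<xi> N k \<omega>"
    | k where "k < N" "1 < norm (dW T W N k \<omega>)"
    unfolding r_def by force
  thus "\<omega> \<in> {\<omega>\<in>space M. y \<le> norm (\<xi> \<omega>)}
     \<union> (\<Union>k\<in>{..<N}. {\<omega>\<in>space M. exp (real N / (4 * T)) \<le> exp (real N / (4 * T) * (norm (dW T W N k \<omega>))\<^sup>2)})
     \<union> (\<Union>x\<in>{(u, k). u \<le> k \<and> k < N}. {\<omega>\<in>space M. exp (\<theta> * (r / 2 * ln (real N))) \<le> exp (\<theta> * SS N (fst x) (snd x) \<omega>)})"
  proof cases
    case (2 k)
    have a0: "0 < real N / (4 * T)" using Npos Tpos by simp
    have "1 \<le> (norm (dW T W N k \<omega>))\<^sup>2" using 2(2) by (simp add: one_le_power)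
    hence "real N / (4 * T) * 1 \<le> real N / (4 * T) * (norm (dW T W N k \<omega>))\<^sup>2"
      using a0 by (intro mult_left_mono) auto
    hence "exp (real N / (4 * T)) \<le> exp (real N / (4 * T) * (norm (dW T W N k \<omega>))\<^sup>2)" by simp
    thus ?thesis using 2(1) wM by blast
  next
    case (1 k)
    show ?thesis
    proof (rule ccontr)
      assume nin: "\<not> ?thesis"
      hence xi: "norm (\<xi> \<omega>) < y" using wM by auto
      have S: "SS N u k \<omega> \<le> r / 2 * ln (real N)" if u: "u \<le> k" for u
      proof -
        have "\<not> exp (\<theta> * (r / 2 * ln (real N))) \<le> exp (\<theta> * SS N u k \<omega>)"
          using nin u 1(1) wM by auto
        hence "\<theta> * SS N u k \<omega> < \<theta> * (r / 2 * ln (real N))" by simp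
        thus ?thesis using th by simp
      qed
      have mx: "Max ((\<lambda>u. SS N u k \<omega>) ` {0..k}) \<le> r / 2 * ln (real N)"
        using S by (subst Max_le_iff) auto
      have "Dn c T \<mu> \<sigma> W \<xi> N k \<omega> = (L + norm (\<xi> \<omega>)) * exp (L + Max ((\<lambda>u. SS N u k \<omega>) ` {0..k}))"
        by (rule Dn_eq)
      also have "\<dots> \<le> (2 * y) * exp (L + r / 2 * ln (real N))"
      proof (rule mult_mono)
        show "L + norm (\<xi> \<omega>) \<le> 2 * y" using xi Ly by simp
        show "exp (L + Max ((\<lambda>u. SS N u k \<omega>) ` {0..k})) \<le> exp (L + r / 2 * ln (real N))" using mx by simp
        show "0 \<le> 2 * y" using Ly xi norm_ge_zero[of "\<xi> \<omega>"] by linarith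
      qed simp
      also have "\<dots> = real N powr (r / 2) * real N powr (r / 2)"
      proof -
        have e: "exp (L + r / 2 * ln (real N)) = exp L * real N powr (r / 2)"
          using Npos by (simp add: exp_add powr_def mult.commute)
        have e2: "exp (- L) * exp L = 1" by (simp add: exp_minus_inverse mult.commute)
        show ?thesis unfolding e yd using e2 by (simp add: algebra_simps)
      qed
      also have "\<dots> = real N powr r" by (simp add: powr_add[symmetric])
      finally show False using 1(2) by simp
    qed
  qed
qed

end

context sde_setting begin

lemma part_xi:
  fixes N :: nat and y qx p r :: real
  assumes N: "1 \<le> N" and qx: "1 \<le> qx" and rqx: "p \<le> r / 2 * qx" and r: "0 < r"
    and yd: "y = real N powr (r / 2) * exp (- L) / 2"
  shows "real N powr p * measure M {\<omega>\<in>space M. y \<le> norm (\<xi> \<omega>)}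
     \<le> enn2real (\<integral>\<^sup>+ \<omega>. ennreal (norm (\<xi> \<omega>) powr qx) \<partial>M) * (2 * exp L) powr qx"
proof -
  define Mx where "Mx = enn2real (\<integral>\<^sup>+ \<omega>. ennreal (norm (\<xi> \<omega>) powr qx) \<partial>M)"
  have Mx0: "0 \<le> Mx" by (simp add: Mx_def)
  have Npos: "0 < real N" using N by simp
  have y0: "0 < y" using Npos by (simp add: yd)
  have ypow: "y powr qx = real N powr (r / 2 * qx) * (exp (- L) / 2) powr qx"
  proof -
    have "y = real N powr (r / 2) * (exp (- L) / 2)" by (simp add: yd)
    hence "y powr qx = (real N powr (r / 2)) powr qx * (exp (- L) / 2) powr qx"
      by (simp only: powr_mult)
    thus ?thesis by (simp add: powr_powr)
  qed
  have one: "(exp (- L) / 2) powr qx * (2 * exp L) powr qx = 1"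
    by (simp add: powr_mult[symmetric] exp_minus field_simps)
  have m: "measure M {\<omega>\<in>space M. y \<le> norm (\<xi> \<omega>)} \<le> Mx / y powr qx"
    unfolding Mx_def by (rule Exi_bound[OF qx y0])
  have "real N powr p * measure M {\<omega>\<in>space M. y \<le> norm (\<xi> \<omega>)} \<le> real N powr (r / 2 * qx) * (Mx / y powr qx)"
    by (rule mult_mono[OF powr_mono[OF rqx] m]) (use N Mx0 in auto)
  also have "\<dots> = Mx * (2 * exp L) powr qx"
  proof -
    have A: "0 < real N powr (r / 2 * qx)" using Npos by simp
    have B: "0 < (exp (- L) / 2) powr qx" by simp
    have "(2 * exp L) powr qx = 1 / (exp (- L) / 2) powr qx" using one B by (simp add: field_simps)
    thus ?thesis unfolding ypow using A B by (simp add: field_simps)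
  qed
  finally show ?thesis by (simp add: Mx_def)
qed

lemma part_W:
  fixes N nW :: nat and p :: real
  assumes N: "1 \<le> N" and nW: "p + 1 \<le> real nW" "0 < nW"
  shows "real N powr p * (\<Sum>k<N. measure M {\<omega>\<in>space M. exp (real N / (4 * T)) \<le> exp (real N / (4 * T) * (norm (dW T W N k \<omega>))\<^sup>2)})
     \<le> (1 / sqrt (1/2) ^ CARD('m)) * ((4 * T) ^ nW * real nW ^ nW)"
proof -
  define Cw :: real where "Cw = 1 / sqrt (1/2) ^ CARD('m)"
  define z where "z = real N / (4 * T)"
  have Cw0: "0 \<le> Cw" by (simp add: Cw_def)
  have Npos: "0 < real N" using N by simp
  have z0: "0 \<le> z" using Npos Tpos by (simp add: z_def)
  have "(\<Sum>k<N. measure M {\<omega>\<in>space M. exp (real N / (4 * T)) \<le> exp (real N / (4 * T) * (norm (dW T W N k \<omega>))\<^sup>2)})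
      \<le> (\<Sum>k<N. Cw / exp z)"
    by (rule sum_mono) (use EW_bound[OF N] in \<open>simp add: Cw_def z_def\<close>)
  also have "\<dots> = real N * (Cw / exp z)" by simp
  finally have s: "(\<Sum>k<N. measure M {\<omega>\<in>space M. exp (real N / (4 * T)) \<le> exp (real N / (4 * T) * (norm (dW T W N k \<omega>))\<^sup>2)})
      \<le> real N * (Cw / exp z)" .
  have "real N powr p * real N = real N powr (p + 1)" using Npos by (simp add: powr_add)
  also have "\<dots> \<le> real N powr real nW" by (rule powr_mono) (use nW N in auto)
  also have "\<dots> = real N ^ nW" using Npos by (simp add: powr_realpow)
  also have "\<dots> = (4 * T) ^ nW * z ^ nW" using Tpos by (simp add: z_def power_divide)
  also have "\<dots> \<le> (4 * T) ^ nW * (real nW ^ nW * exp z)"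
    by (rule mult_left_mono[OF pow_exp_bound[OF nW(2) z0]]) (use Tpos in simp)
  finally have pw: "real N powr p * real N \<le> (4 * T) ^ nW * (real nW ^ nW * exp z)" .
  have "real N powr p * (\<Sum>k<N. measure M {\<omega>\<in>space M. exp (real N / (4 * T)) \<le> exp (real N / (4 * T) * (norm (dW T W N k \<omega>))\<^sup>2)})
      \<le> real N powr p * (real N * (Cw / exp z))" by (rule mult_left_mono[OF s]) simp
  also have "\<dots> = (real N powr p * real N) * (Cw / exp z)" by simp
  also have "\<dots> \<le> (4 * T) ^ nW * (real nW ^ nW * exp z) * (Cw / exp z)"
    by (rule mult_right_mono[OF pw]) (use Cw0 in simp)
  also have "\<dots> = Cw * ((4 * T) ^ nW * real nW ^ nW)" by (simp add: field_simps)
  finally show ?thesis by (simp add: Cw_def)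
qed

lemma part_S:
  fixes N :: nat and p r \<theta> :: real
  assumes N: "1 \<le> N" and th: "0 < \<theta>" and big: "4 * \<theta> * L * T \<le> real N"
    and thr: "\<theta> * (r / 2) = p + 2"
  shows "real N powr p * (\<Sum>x\<in>{(u, k). u \<le> k \<and> k < N}. measure M {\<omega>\<in>space M. exp (\<theta> * (r / 2 * ln (real N))) \<le> exp (\<theta> * SS N (fst x) (snd x) \<omega>)})
     \<le> exp (T * ((\<theta> * K)\<^sup>2 + 2 * (\<theta> * L) * real CARD('m)))"
proof -
  define B where "B = exp (T * ((\<theta> * K)\<^sup>2 + 2 * (\<theta> * L) * real CARD('m)))"
  define Pr where "Pr = {(u, k). u \<le> k \<and> k < N}"
  have Npos: "0 < real N" using N by simp
  have B0: "0 \<le> B" by (simp add: B_def)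
  have t: "exp (\<theta> * (r / 2 * ln (real N))) = real N powr (p + 2)"
  proof -
    have "\<theta> * (r / 2 * ln (real N)) = (p + 2) * ln (real N)" using thr by (simp add: mult.assoc[symmetric])
    thus ?thesis using Npos by (simp add: powr_def)
  qed
  have tp: "0 < real N powr (p + 2)" using Npos by simp
  have PrS: "Pr \<subseteq> {..<N} \<times> {..<N}" by (auto simp: Pr_def)
  have finPr: "finite Pr" using PrS finite_subset by blast
  have cardPr: "real (card Pr) \<le> real N * real N"
  proof -
    have "card Pr \<le> card ({..<N} \<times> {..<N})" by (rule card_mono[OF _ PrS]) simp
    hence "card Pr \<le> N * N" by (simp add: card_cartesian_product)
    hence "real (card Pr) \<le> real (N * N)" by (rule of_nat_mono)
    thus ?thesis by simp
  qed
  have "(\<Sum>x\<in>Pr. measure M {\<omega>\<in>space M. exp (\<theta> * (r / 2 * ln (real N))) \<le> exp (\<theta> * SS N (fst x) (snd x) \<omega>)})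
      \<le> (\<Sum>x\<in>Pr. B / real N powr (p + 2))"
  proof (rule sum_mono)
    fix x assume "x \<in> Pr"
    hence x: "fst x \<le> snd x" "snd x \<le> N" by (auto simp: Pr_def)
    show "measure M {\<omega>\<in>space M. exp (\<theta> * (r / 2 * ln (real N))) \<le> exp (\<theta> * SS N (fst x) (snd x) \<omega>)} \<le> B / real N powr (p + 2)"
      unfolding t B_def by (rule ES_bound[OF N less_imp_le[OF th] big x tp])
  qed
  also have "\<dots> = real (card Pr) * (B / real N powr (p + 2))" by simp
  also have "\<dots> \<le> real N * real N * (B / real N powr (p + 2))"
    by (rule mult_right_mono[OF cardPr]) (use B0 tp in simp)
  finally have s: "(\<Sum>x\<in>Pr. measure M {\<omega>\<in>space M. exp (\<theta> * (r / 2 * ln (real N))) \<le> exp (\<theta> * SS N (fst x) (snd x) \<omega>)})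
      \<le> real N * real N * (B / real N powr (p + 2))" .
  have pp: "real N powr (p + 2) = real N powr p * (real N * real N)"
    using Npos by (simp add: powr_add power2_eq_square)
  have "real N powr p * (\<Sum>x\<in>Pr. measure M {\<omega>\<in>space M. exp (\<theta> * (r / 2 * ln (real N))) \<le> exp (\<theta> * SS N (fst x) (snd x) \<omega>)})
      \<le> real N powr p * (real N * real N * (B / real N powr (p + 2)))"
    by (rule mult_left_mono[OF s]) simp
  also have "\<dots> = B" unfolding pp using Npos by (simp add: field_simps)
  finally show ?thesis by (simp add: B_def Pr_def)
qed

end

context sde_setting begin

lemma dW_M: "1 \<le> N \<Longrightarrow> k < N \<Longrightarrow> dW T W N k \<in> borel_measurable M"
  using measurable_sub[OF dW_meas] FF[of "tt N (Suc k)"] tt_range[of N "Suc k"] by auto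

lemma SS_M: "1 \<le> N \<Longrightarrow> k \<le> N \<Longrightarrow> SS N u k \<in> borel_measurable M"
  using measurable_sub[OF SS_meas] FF[of "tt N k"] tt_range[of N k] by auto

lemma main:
  assumes p: "1 \<le> p"
  shows "bdd_above ((\<lambda>N. real N powr p * measure M (space M - OmegaN M c T \<mu> \<sigma> W \<xi> N N)) ` {1..})"
proof -
  interpret prob_space M by (rule P)
  define r where "r = 1 / (2 * c)"
  have r0: "0 < r" using cpos by (simp add: r_def)
  define \<theta> where "\<theta> = 2 * (p + 2) / r"
  have th0: "0 < \<theta>" using r0 p by (simp add: \<theta>_def)
  have thr: "\<theta> * (r / 2) = p + 2" using r0 by (simp add: \<theta>_def)
  define qx where "qx = max 1 (2 * p / r)"
  have qx1: "1 \<le> qx" by (simp add: qx_def)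
  have rqx: "p \<le> r / 2 * qx"
  proof -
    have "2 * p / r \<le> qx" by (simp add: qx_def)
    hence "r / 2 * (2 * p / r) \<le> r / 2 * qx" using r0 by (intro mult_left_mono) auto
    thus ?thesis using r0 by simp
  qed
  define nW where "nW = nat \<lceil>p + 1\<rceil>"
  have nW1: "p + 1 \<le> real nW" unfolding nW_def by linarith
  have nW0: "0 < nW" using p unfolding nW_def by linarith
  define Cxi where "Cxi = enn2real (\<integral>\<^sup>+ \<omega>. ennreal (norm (\<xi> \<omega>) powr qx) \<partial>M) * (2 * exp L) powr qx"
  define CW :: real where "CW = (1 / sqrt (1/2) ^ CARD('m)) * ((4 * T) ^ nW * real nW ^ nW)"
  define B where "B = exp (T * ((\<theta> * K)\<^sup>2 + 2 * (\<theta> * L) * real CARD('m)))"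
  define A0 where "A0 = max (4 * \<theta> * L * T) ((2 * L * exp L) powr (2 / r))"
  define N0 where "N0 = nat \<lceil>A0\<rceil> + 1"
  have L0: "0 \<le> L" by (simp add: lam_def)
  show ?thesis
  proof (rule bdd_aboveI2)
    fix N :: nat assume "N \<in> {1..}"
    hence N: "1 \<le> N" by simp
    have Npos: "0 < real N" using N by simp
    show "real N powr p * measure M (space M - OmegaN M c T \<mu> \<sigma> W \<xi> N N) \<le> max (real N0 powr p) (Cxi + CW + B)"
    proof (cases "N < N0")
      case True
      have "real N powr p * measure M (space M - OmegaN M c T \<mu> \<sigma> W \<xi> N N) \<le> real N0 powr p * 1"
        by (rule mult_mono) (use True p in \<open>auto intro!: powr_mono2\<close>)
      thus ?thesis by simp
    next
      case False
      have hA: "A0 < real N" using False unfolding N0_def by linarith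
      have big: "4 * \<theta> * L * T \<le> real N" using hA unfolding A0_def by simp
      define y where "y = real N powr (r / 2) * exp (- L) / 2"
      have Ly: "L \<le> y"
      proof -
        have b0: "0 \<le> 2 * L * exp L" using L0 by simp
        have "(2 * L * exp L) powr (2 / r) \<le> real N" using hA unfolding A0_def by simp
        hence "((2 * L * exp L) powr (2 / r)) powr (r / 2) \<le> real N powr (r / 2)"
          using r0 by (intro powr_mono2) auto
        also have "((2 * L * exp L) powr (2 / r)) powr (r / 2) = 2 * L * exp L"
          using r0 b0 by (simp add: powr_powr)
        finally have "2 * L * exp L \<le> real N powr (r / 2)" .
        hence "2 * L * exp L * exp (- L) / 2 \<le> real N powr (r / 2) * exp (- L) / 2"
          by (intro divide_right_mono mult_right_mono) auto
        moreover have "2 * L * exp L * exp (- L) / 2 = L" by (simp add: exp_minus field_simps)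
        ultimately show ?thesis by (simp add: y_def)
      qed
      define Ex where "Ex = {\<omega>\<in>space M. y \<le> norm (\<xi> \<omega>)}"
      define EW where "EW = (\<lambda>k. {\<omega>\<in>space M. exp (real N / (4 * T)) \<le> exp (real N / (4 * T) * (norm (dW T W N k \<omega>))\<^sup>2)})"
      define ES where "ES = (\<lambda>x. {\<omega>\<in>space M. exp (\<theta> * (r / 2 * ln (real N))) \<le> exp (\<theta> * SS N (fst x) (snd x) \<omega>)})"
      define Pr where "Pr = {(u, k). u \<le> k \<and> k < N}"
      have PrS: "Pr \<subseteq> {..<N} \<times> {..<N}" by (auto simp: Pr_def)
      have finPr: "finite Pr" using PrS finite_subset by blast
      have ExM: "Ex \<in> sets M" unfolding Ex_def using xi_M by measurable
      have EWM: "EW k \<in> sets M" if "k < N" for k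
      proof -
        have [measurable]: "dW T W N k \<in> borel_measurable M" using dW_M[OF N that] .
        show ?thesis unfolding EW_def by measurable
      qed
      have ESM: "ES x \<in> sets M" if "x \<in> Pr" for x
      proof -
        have [measurable]: "SS N (fst x) (snd x) \<in> borel_measurable M" using SS_M[OF N] that by (auto simp: Pr_def)
        show ?thesis unfolding ES_def by measurable
      qed
      have EWsM: "(\<Union>k\<in>{..<N}. EW k) \<in> sets M" using EWM by auto
      have ESsM: "(\<Union>x\<in>Pr. ES x) \<in> sets M" using ESM finPr by auto
      have inc: "space M - OmegaN M c T \<mu> \<sigma> W \<xi> N N \<subseteq> Ex \<union> (\<Union>k\<in>{..<N}. EW k) \<union> (\<Union>x\<in>Pr. ES x)"
        unfolding Ex_def EW_def ES_def Pr_def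
        by (rule incl[OF N th0 Ly y_def[unfolded r_def], folded r_def])
      have "measure M (space M - OmegaN M c T \<mu> \<sigma> W \<xi> N N) \<le> measure M (Ex \<union> (\<Union>k\<in>{..<N}. EW k) \<union> (\<Union>x\<in>Pr. ES x))"
        by (rule finite_measure_mono[OF inc]) (use ExM EWsM ESsM in auto)
      also have "\<dots> \<le> measure M (Ex \<union> (\<Union>k\<in>{..<N}. EW k)) + measure M (\<Union>x\<in>Pr. ES x)"
        by (rule measure_subadditive) (use ExM EWsM ESsM in auto)
      also have "measure M (Ex \<union> (\<Union>k\<in>{..<N}. EW k)) \<le> measure M Ex + measure M (\<Union>k\<in>{..<N}. EW k)"
        by (rule measure_subadditive) (use ExM EWsM in auto)
      also have "measure M (\<Union>k\<in>{..<N}. EW k) \<le> (\<Sum>k<N. measure M (EW k))"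
        by (rule finite_measure_subadditive_finite) (use EWM in auto)
      also have "measure M (\<Union>x\<in>Pr. ES x) \<le> (\<Sum>x\<in>Pr. measure M (ES x))"
        by (rule finite_measure_subadditive_finite) (use ESM finPr in auto)
      finally have m: "measure M (space M - OmegaN M c T \<mu> \<sigma> W \<xi> N N)
          \<le> measure M Ex + (\<Sum>k<N. measure M (EW k)) + (\<Sum>x\<in>Pr. measure M (ES x))" by simp
      have a: "real N powr p * measure M Ex \<le> Cxi"
        unfolding Ex_def Cxi_def by (rule part_xi[OF N qx1 rqx r0 y_def])
      have b: "real N powr p * (\<Sum>k<N. measure M (EW k)) \<le> CW"
        unfolding EW_def CW_def by (rule part_W[OF N nW1 nW0])
      have c: "real N powr p * (\<Sum>x\<in>Pr. measure M (ES x)) \<le> B"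
        unfolding ES_def Pr_def B_def by (rule part_S[OF N th0 big thr])
      have "real N powr p * measure M (space M - OmegaN M c T \<mu> \<sigma> W \<xi> N N)
          \<le> real N powr p * (measure M Ex + (\<Sum>k<N. measure M (EW k)) + (\<Sum>x\<in>Pr. measure M (ES x)))"
        by (rule mult_left_mono[OF m]) simp
      also have "\<dots> = real N powr p * measure M Ex + real N powr p * (\<Sum>k<N. measure M (EW k)) + real N powr p * (\<Sum>x\<in>Pr. measure M (ES x))"
        by (simp add: distrib_left)
      also have "\<dots> \<le> Cxi + CW + B" using a b c by linarith
      finally show ?thesis by simp
    qed
  qed
qed

end

theorem lemma3p6:
  fixes M :: "'a measure" and T c :: real and F :: "real \<Rightarrow> 'a measure"
    and W :: "real \<Rightarrow> 'a \<Rightarrow> real^'m::finite" and \<xi> :: "'a \<Rightarrow> real^'d::finite"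
    and \<mu> :: "real^'d \<Rightarrow> real^'d" and \<mu>' :: "real^'d \<Rightarrow> ((real^'d) \<Rightarrow>\<^sub>L (real^'d))"
    and \<sigma> :: "real^'d \<Rightarrow> ((real^'m) \<Rightarrow>\<^sub>L (real^'d))"
  assumes "prob_space M"
    and "0 < T"
    and "normal_filtration M T F"
    and "std_brownian_motion M T F W"
    and "\<xi> \<in> borel_measurable (F 0)"
    and "\<forall>p\<ge>1. (\<integral>\<^sup>+ \<omega>. ennreal (norm (\<xi> \<omega>) powr p) \<partial>M) < \<infinity>"
    and "0 < c"
    and "\<forall>x. (\<mu> has_derivative blinfun_apply (\<mu>' x)) (at x)"
    and "continuous_on UNIV \<mu>'"
    and "\<forall>x. norm (\<mu>' x) \<le> c * (1 + norm x powr c)"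
    and "\<forall>x y. norm (\<sigma> x - \<sigma> y) \<le> c * norm (x - y)"
    and "\<forall>x y. inner (x - y) (\<mu> x - \<mu> y) \<le> c * (norm (x - y))\<^sup>2"
  shows "\<forall>p\<ge>1. bdd_above
           ((\<lambda>N. real N powr p * measure M (space M - OmegaN M c T \<mu> \<sigma> W \<xi> N N)) ` {1..})"
proof -
  interpret sde_setting M T c F W \<xi> \<mu> \<mu>' \<sigma>
    using assms(1-8) assms(11) by (rule sde_setting.intro)
  show ?thesis using main by blast
qed

end
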